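(* Fix $\eta>0$, let $\mu\in\mathbb{L}_2$ and $\lambda\in\mathbb{R}^{2md}$, and let $\delta=\max_{e\in E,i\in e}\|\nu^\lambda_{e,i}\|_1$. Then there exists $\hat\mu$ in the slack polytope $\mathbb{L}_2^{\nu^\lambda}$ such that $$\|\mu-\hat\mu\|_1\le16(m+n)d\delta+2\sum_{e\in E,i\in e}\|\nu^\lambda_{e,i}\|_1.$$
   Context: Let $G=(V,E)$ be a finite undirected graph with $n=|V|$, $m=|E|$, every vertex incident to at least one edge; $N_i=\{e\in E:i\in e\}$. $\chi$ is a finite label set with $d=|\chi|\ge2$. Costs $C_i\in\mathbb{R}^\chi$, $C_e\in\mathbb{R}^{\chi^2}$; for $e=\{i,j\}$, $x_e=(x_i,x_j)$, $(x_e)_i=x_i$. For $\mu=((\mu_i)_{i\in V},(\mu_e)_{e\in E})$, $\|\mu\|_1$ is the sum of absolute values of all entries. $\mathbb{L}_2=\{\mu\ge0:\mu_i\in\Sigma^d\ \forall i,\ \sum_{x_e:(x_e)_i=x}\mu_e(x_e)=\mu_i(x)\ \forall e,\,i\in e,\,x\}$, $\Sigma^d$ the probability simplex on $\chi$. For a vector $\nu=(\nu_{e,i})_{e\in E,i\in e}$, $\nu_{e,i}\in\mathbb{R}^\chi$, the slack polytope is $\mathbb{L}_2^\nu=\{\mu\ge0:\mu_i\in\Sigma^d\ \forall i,\ \sum_{x_e:(x_e)_i=x}\mu_e(x_e)=\mu_i(x)+\nu_{e,i}(x)\ \forall e,\,i\in e,\,x\}$. For $\lambda\in\mathbb{R}^{2md}$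 (indexed by $(e,i,x)$): $\mu^\lambda_i(x)\propto\exp(-\eta C_i(x)+\eta\sum_{e\in N_i}\lambda_{e,i}(x))$, $\mu^\lambda_e(x_e)\propto\exp(-\eta C_e(x_e)-\eta\sum_{i\in e}\lambda_{e,i}((x_e)_i))$, each normalized; $S^\lambda_{e,i}(x)=\sum_{x_e:(x_e)_i=x}\mu^\lambda_e(x_e)$; slack $\nu^\lambda_{e,i}=S^\lambda_{e,i}-\mu^\lambda_i$. *)

theory Defs
  imports "HOL-Analysis.Analysis"
begin

text \<open>A joint labelling x_e of an edge e is an element of PiE e (\<lambda>_. X), i.e. a map
from the two endpoints of e to labels; (x_e)_i is simply x_e i.
A "marginal vector" mu is a pair (mv, me) with mv :: 'v \<Rightarrow> 'l \<Rightarrow> real (node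
marginals mu_i(x)) and me :: 'v set \<Rightarrow> ('v \<Rightarrow> 'l) \<Rightarrow> real (edge marginals mu_e(x_e)).
Slack vectors nu and dual vectors lambda are indexed by (e, i, x).\<close>

definition edge_labs :: "'l set \<Rightarrow> 'v set \<Rightarrow> ('v \<Rightarrow> 'l) set" where
  "edge_labs X e = PiE e (\<lambda>_. X)"

definition graph_ok :: "'v set \<Rightarrow> 'v set set \<Rightarrow> bool" where
  "graph_ok V E \<longleftrightarrow> finite V \<and> (\<forall>e\<in>E. e \<subseteq> V \<and> card e = 2)
     \<and> (\<forall>i\<in>V. \<exists>e\<in>E. i \<in> e)"

definition slack_polytope ::
  "'v set \<Rightarrow> 'v set set \<Rightarrow> 'l set \<Rightarrow> ('v set \<Rightarrow> 'v \<Rightarrow> 'l \<Rightarrow> real)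
   \<Rightarrow> ('v \<Rightarrow> 'l \<Rightarrow> real) \<Rightarrow> ('v set \<Rightarrow> ('v \<Rightarrow> 'l) \<Rightarrow> real) \<Rightarrow> bool" where
  "slack_polytope V E X nu mv me \<longleftrightarrow>
     (\<forall>i\<in>V. \<forall>x\<in>X. mv i x \<ge> 0)
   \<and> (\<forall>e\<in>E. \<forall>xe\<in>edge_labs X e. me e xe \<ge> 0)
   \<and> (\<forall>i\<in>V. (\<Sum>x\<in>X. mv i x) = 1)
   \<and> (\<forall>e\<in>E. \<forall>i\<in>e. \<forall>x\<in>X.
        (\<Sum>xe\<in>{xe\<in>edge_labs X e. xe i = x}. me e xe) = mv i x + nu e i x)"

definition local_polytope ::
  "'v set \<Rightarrow> 'v set set \<Rightarrow> 'l set
   \<Rightarrow> ('v \<Rightarrow> 'l \<Rightarrow> real) \<Rightarrow> ('v set \<Rightarrow> ('v \<Rightarrow> 'l) \<Rightarrow> real) \<Rightarrow> bool" where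
  "local_polytope V E X mv me \<longleftrightarrow> slack_polytope V E X (\<lambda>_ _ _. 0) mv me"

definition l1_dist ::
  "'v set \<Rightarrow> 'v set set \<Rightarrow> 'l set
   \<Rightarrow> ('v \<Rightarrow> 'l \<Rightarrow> real) \<Rightarrow> ('v set \<Rightarrow> ('v \<Rightarrow> 'l) \<Rightarrow> real)
   \<Rightarrow> ('v \<Rightarrow> 'l \<Rightarrow> real) \<Rightarrow> ('v set \<Rightarrow> ('v \<Rightarrow> 'l) \<Rightarrow> real) \<Rightarrow> real" where
  "l1_dist V E X mv me mv' me' =
     (\<Sum>i\<in>V. \<Sum>x\<in>X. \<bar>mv i x - mv' i x\<bar>)
   + (\<Sum>e\<in>E. \<Sum>xe\<in>edge_labs X e. \<bar>me e xe - me' e xe\<bar>)"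

definition mu_lam_v ::
  "'v set set \<Rightarrow> 'l set \<Rightarrow> real \<Rightarrow> ('v \<Rightarrow> 'l \<Rightarrow> real)
   \<Rightarrow> ('v set \<Rightarrow> 'v \<Rightarrow> 'l \<Rightarrow> real) \<Rightarrow> 'v \<Rightarrow> 'l \<Rightarrow> real" where
  "mu_lam_v E X \<eta> Cv lam i x =
     exp (- \<eta> * Cv i x + \<eta> * (\<Sum>e\<in>{e\<in>E. i \<in> e}. lam e i x))
     / (\<Sum>y\<in>X. exp (- \<eta> * Cv i y + \<eta> * (\<Sum>e\<in>{e\<in>E. i \<in> e}. lam e i y)))"

definition mu_lam_e ::
  "'l set \<Rightarrow> real \<Rightarrow> ('v set \<Rightarrow> ('v \<Rightarrow> 'l) \<Rightarrow> real)
   \<Rightarrow> ('v set \<Rightarrow> 'v \<Rightarrow> 'l \<Rightarrow> real) \<Rightarrow> 'v set \<Rightarrow> ('v \<Rightarrow> 'l) \<Rightarrow> real" where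
  "mu_lam_e X \<eta> Ce lam e xe =
     exp (- \<eta> * Ce e xe - \<eta> * (\<Sum>i\<in>e. lam e i (xe i)))
     / (\<Sum>ye\<in>edge_labs X e. exp (- \<eta> * Ce e ye - \<eta> * (\<Sum>i\<in>e. lam e i (ye i))))"

definition S_lam ::
  "'l set \<Rightarrow> real \<Rightarrow> ('v set \<Rightarrow> ('v \<Rightarrow> 'l) \<Rightarrow> real)
   \<Rightarrow> ('v set \<Rightarrow> 'v \<Rightarrow> 'l \<Rightarrow> real) \<Rightarrow> 'v set \<Rightarrow> 'v \<Rightarrow> 'l \<Rightarrow> real" where
  "S_lam X \<eta> Ce lam e i x =
     (\<Sum>xe\<in>{xe\<in>edge_labs X e. xe i = x}. mu_lam_e X \<eta> Ce lam e xe)"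

definition nu_lam ::
  "'v set set \<Rightarrow> 'l set \<Rightarrow> real \<Rightarrow> ('v \<Rightarrow> 'l \<Rightarrow> real) \<Rightarrow> ('v set \<Rightarrow> ('v \<Rightarrow> 'l) \<Rightarrow> real)
   \<Rightarrow> ('v set \<Rightarrow> 'v \<Rightarrow> 'l \<Rightarrow> real) \<Rightarrow> 'v set \<Rightarrow> 'v \<Rightarrow> 'l \<Rightarrow> real" where
  "nu_lam E X \<eta> Cv Ce lam e i x = S_lam X \<eta> Ce lam e i x - mu_lam_v E X \<eta> Cv lam i x"

definition nu_norm :: "'l set \<Rightarrow> ('v set \<Rightarrow> 'v \<Rightarrow> 'l \<Rightarrow> real) \<Rightarrow> 'v set \<Rightarrow> 'v \<Rightarrow> real" where
  "nu_norm X nu e i = (\<Sum>x\<in>X. \<bar>nu e i x\<bar>)"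

end

theory Submission
  imports Defs
begin

lemma finite_edge_labs: "finite e \<Longrightarrow> finite X \<Longrightarrow> finite (edge_labs X e)"
  unfolding edge_labs_def by (simp add: finite_PiE)

lemma edge_labs_ne: "X \<noteq> {} \<Longrightarrow> edge_labs X e \<noteq> {}"
  unfolding edge_labs_def by (simp add: PiE_eq_empty_iff)

lemma sum_group_edge:
  assumes "finite e" "finite X" "i \<in> e"
  shows "(\<Sum>x\<in>X. \<Sum>xe\<in>{xe\<in>edge_labs X e. xe i = x}. g xe) = (\<Sum>xe\<in>edge_labs X e. g xe)"
proof -
  have "(\<lambda>xe. xe i) ` edge_labs X e \<subseteq> X"
    using assms(3) unfolding edge_labs_def by auto
  from sum.group[OF finite_edge_labs[OF assms(1,2)] assms(2) this, of g]
  show ?thesis by simp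
qed

lemma marg_prod:
  fixes f :: "'v \<Rightarrow> 'l \<Rightarrow> real"
  assumes "finite e" "i \<in> e" "x \<in> X" "finite X"
  shows "(\<Sum>xe\<in>{xe\<in>edge_labs X e. xe i = x}. \<Prod>k\<in>e. f k (xe k))
       = f i x * (\<Prod>k\<in>e-{i}. \<Sum>y\<in>X. f k y)"
proof -
  define B where "B = (\<lambda>k. if k = i then {x} else X)"
  have eq: "{xe\<in>edge_labs X e. xe i = x} = PiE e B"
    using assms unfolding edge_labs_def B_def by (auto simp: PiE_iff extensional_def split: if_splits)
  have "(\<Sum>g\<in>PiE e B. \<Prod>k\<in>e. f k (g k)) = (\<Prod>k\<in>e. \<Sum>y\<in>B k. f k y)"
    using prod_sum_PiE[of e B f] assms unfolding B_def by auto
  also have "\<dots> = (\<Sum>y\<in>B i. f i y) * (\<Prod>k\<in>e-{i}. \<Sum>y\<in>B k. f k y)"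
    using assms by (simp add: prod.remove)
  also have "\<dots> = f i x * (\<Prod>k\<in>e-{i}. \<Sum>y\<in>X. f k y)"
    unfolding B_def by (auto intro!: prod.cong)
  finally show ?thesis using eq by simp
qed

lemma total_prod:
  fixes f :: "'v \<Rightarrow> 'l \<Rightarrow> real"
  assumes "finite e" "finite X"
  shows "(\<Sum>xe\<in>edge_labs X e. \<Prod>k\<in>e. f k (xe k)) = (\<Prod>k\<in>e. \<Sum>y\<in>X. f k y)"
  using prod_sum_PiE[of e "\<lambda>_. X" f] assms unfolding edge_labs_def by auto

lemma mu_v_nonneg: "mu_lam_v E X \<eta> Cv lam i x \<ge> 0"
  unfolding mu_lam_v_def by (intro divide_nonneg_nonneg sum_nonneg) auto

lemma mu_v_sum:
  assumes "finite X" "X \<noteq> {}"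
  shows "(\<Sum>x\<in>X. mu_lam_v E X \<eta> Cv lam i x) = 1"
proof -
  have "(\<Sum>y\<in>X. exp (- \<eta> * Cv i y + \<eta> * (\<Sum>e\<in>{e\<in>E. i \<in> e}. lam e i y))) > 0"
    using assms by (intro sum_pos) auto
  then show ?thesis unfolding mu_lam_v_def by (simp add: sum_divide_distrib[symmetric])
qed

lemma mu_e_nonneg: "mu_lam_e X \<eta> Ce lam e xe \<ge> 0"
  unfolding mu_lam_e_def by (intro divide_nonneg_nonneg sum_nonneg) auto

lemma mu_e_sum:
  assumes "finite X" "X \<noteq> {}" "finite e"
  shows "(\<Sum>xe\<in>edge_labs X e. mu_lam_e X \<eta> Ce lam e xe) = 1"
proof -
  have "(\<Sum>ye\<in>edge_labs X e. exp (- \<eta> * Ce e ye - \<eta> * (\<Sum>i\<in>e. lam e i (ye i)))) > 0"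
    using assms by (intro sum_pos finite_edge_labs edge_labs_ne) auto
  then show ?thesis unfolding mu_lam_e_def by (simp add: sum_divide_distrib[symmetric])
qed

lemma nu_sum0:
  assumes "finite X" "X \<noteq> {}" "finite e" "i \<in> e"
  shows "(\<Sum>x\<in>X. nu_lam E X \<eta> Cv Ce lam e i x) = 0"
  unfolding nu_lam_def S_lam_def using assms
  by (simp add: sum_subtractf sum_group_edge mu_e_sum mu_v_sum)

lemma abs_sum_le:
  fixes a b :: "'a \<Rightarrow> real"
  assumes "\<And>x. x \<in> A \<Longrightarrow> a x \<ge> 0" "\<And>x. x \<in> A \<Longrightarrow> b x \<ge> 0"
  shows "(\<Sum>x\<in>A. \<bar>a x - b x\<bar>) \<le> (\<Sum>x\<in>A. a x) + (\<Sum>x\<in>A. b x)"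
proof -
  have "(\<Sum>x\<in>A. \<bar>a x - b x\<bar>) \<le> (\<Sum>x\<in>A. a x + b x)"
    using assms by (intro sum_mono) (smt (verit))
  then show ?thesis by (simp add: sum.distrib)
qed

theorem lemma6:
  fixes V :: "'v set" and E :: "'v set set" and X :: "'l set"
    and Cv :: "'v \<Rightarrow> 'l \<Rightarrow> real" and Ce :: "'v set \<Rightarrow> ('v \<Rightarrow> 'l) \<Rightarrow> real"
    and \<eta> :: real and lam :: "'v set \<Rightarrow> 'v \<Rightarrow> 'l \<Rightarrow> real"
    and mv :: "'v \<Rightarrow> 'l \<Rightarrow> real" and me :: "'v set \<Rightarrow> ('v \<Rightarrow> 'l) \<Rightarrow> real"
  assumes "graph_ok V E"
    and "finite X" and "card X \<ge> 2"
    and "\<eta> > 0"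
    and "local_polytope V E X mv me"
  shows "\<exists>mv' me'.
           slack_polytope V E X (nu_lam E X \<eta> Cv Ce lam) mv' me'
         \<and> l1_dist V E X mv me mv' me'
             \<le> 16 * real (card E + card V) * real (card X)
                  * Max {nu_norm X (nu_lam E X \<eta> Cv Ce lam) e i | e i. e \<in> E \<and> i \<in> e}
               + 2 * (\<Sum>e\<in>E. \<Sum>i\<in>e. nu_norm X (nu_lam E X \<eta> Cv Ce lam) e i)"
proof -
  define nu where "nu = nu_lam E X \<eta> Cv Ce lam"
  define N where "N = nu_norm X nu"
  define Sset where "Sset = {N e i | e i. e \<in> E \<and> i \<in> e}"
  define \<delta> where "\<delta> = Max Sset"
  define d where "d = real (card X)"
  have finV: "finite V" and edges: "\<And>e. e \<in> E \<Longrightarrow> e \<subseteq> V \<and> card e = 2"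
    and cover: "\<And>i. i \<in> V \<Longrightarrow> \<exists>e\<in>E. i \<in> e"
    using assms(1) unfolding graph_ok_def by auto
  have finE: "finite E"
    using edges finV by (metis Pow_iff finite_Pow_iff rev_finite_subset subsetI)
  have fin_e: "\<And>e. e \<in> E \<Longrightarrow> finite e"
    using edges by (metis card.infinite zero_neq_numeral)
  have ne_e: "\<And>e. e \<in> E \<Longrightarrow> e \<noteq> {}"
    using edges by fastforce
  have Xne: "X \<noteq> {}" using assms(3) by auto
  have d2: "d \<ge> 2" using assms(3) unfolding d_def by simp
  have mv0: "\<And>i x. i \<in> V \<Longrightarrow> x \<in> X \<Longrightarrow> mv i x \<ge> 0"
   and me0: "\<And>e xe. e \<in> E \<Longrightarrow> xe \<in> edge_labs X e \<Longrightarrow> me e xe \<ge> 0"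
   and mvs: "\<And>i. i \<in> V \<Longrightarrow> (\<Sum>x\<in>X. mv i x) = 1"
   and mar: "\<And>e i x. e \<in> E \<Longrightarrow> i \<in> e \<Longrightarrow> x \<in> X \<Longrightarrow>
        (\<Sum>xe\<in>{xe\<in>edge_labs X e. xe i = x}. me e xe) = mv i x"
    using assms(5) unfolding local_polytope_def slack_polytope_def by auto
  have mes: "(\<Sum>xe\<in>edge_labs X e. me e xe) = 1" if eE: "e \<in> E" for e
  proof -
    obtain i where i: "i \<in> e" using ne_e[OF eE] by auto
    have "i \<in> V" using edges[OF eE] i by auto
    have "(\<Sum>xe\<in>edge_labs X e. me e xe) = (\<Sum>x\<in>X. \<Sum>xe\<in>{xe\<in>edge_labs X e. xe i = x}. me e xe)"
      using sum_group_edge[OF fin_e[OF eE] assms(2) i, of "me e"] by simp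
    also have "\<dots> = (\<Sum>x\<in>X. mv i x)" using mar[OF eE i] by simp
    finally show ?thesis using mvs[OF \<open>i \<in> V\<close>] by simp
  qed
  have N0: "N e i \<ge> 0" for e i unfolding N_def nu_norm_def by (simp add: sum_nonneg)
  have sumN0: "(\<Sum>e\<in>E. \<Sum>i\<in>e. N e i) \<ge> 0" by (intro sum_nonneg N0)
  show ?thesis
  proof (cases "E = {}")
    case True
    then have "V = {}" using cover by blast
    then show ?thesis using True
      by (intro exI[of _ mv] exI[of _ me]) (simp add: slack_polytope_def l1_dist_def)
  next
    case Ene: False
    have finS: "finite Sset"
    proof -
      have "Sset \<subseteq> (\<lambda>p. N (fst p) (snd p)) ` (SIGMA e:E. e)" unfolding Sset_def by force
      moreover have "finite (SIGMA e:E. e)" using finE fin_e by auto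
      ultimately show ?thesis by (meson finite_imageI finite_subset)
    qed
    have hd: "N e i \<le> \<delta>" if "e \<in> E" "i \<in> e" for e i
      unfolding \<delta>_def using finS that by (intro Max_ge) (auto simp: Sset_def)
    have d0: "\<delta> \<ge> 0"
    proof -
      obtain e where e: "e \<in> E" using Ene by auto
      obtain i where i: "i \<in> e" using ne_e[OF e] by auto
      from e i show ?thesis using hd[of e i] N0[of e i] by linarith
    qed
    have hnu: "\<bar>nu e i x\<bar> \<le> \<delta>" if "e \<in> E" "i \<in> e" "x \<in> X" for e i x
    proof -
      have "\<bar>nu e i x\<bar> \<le> N e i" unfolding N_def nu_norm_def
        using assms(2) that(3) by (intro member_le_sum) auto
      then show ?thesis using hd[OF that(1,2)] by linarith
    qed
    have nus: "(\<Sum>x\<in>X. nu e i x) = 0" if "e \<in> E" "i \<in> e" for e i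
      unfolding nu_def using nu_sum0[OF assms(2) Xne fin_e[OF that(1)] that(2)] .
    define R where "R = 16 * real (card E + card V) * d * \<delta>
               + 2 * (\<Sum>e\<in>E. \<Sum>i\<in>e. N e i)"
    have R_ge: "R \<ge> 16 * real (card E + card V) * d * \<delta>"
      unfolding R_def using sumN0 by simp
    have goal: "\<exists>mv' me'. slack_polytope V E X nu mv' me' \<and> l1_dist V E X mv me mv' me' \<le> R"
    proof -
      consider "8 * d * \<delta> \<ge> 1" | "\<delta> = 0" | "\<delta> > 0" "8 * d * \<delta> < 1" using d0 by linarith
      then show ?thesis
      proof cases
        case 1
        define gv where "gv = mu_lam_v E X \<eta> Cv lam"
        define ge where "ge = mu_lam_e X \<eta> Ce lam"
        have sl: "slack_polytope V E X nu gv ge"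
          unfolding slack_polytope_def nu_def gv_def ge_def
          by (simp add: nu_lam_def S_lam_def mu_v_nonneg mu_e_nonneg mu_v_sum[OF assms(2) Xne])
        have "l1_dist V E X mv me gv ge \<le> (\<Sum>i\<in>V. 2) + (\<Sum>e\<in>E. 2)"
          unfolding l1_dist_def
        proof (intro add_mono sum_mono)
          fix i assume i: "i \<in> V"
          have "(\<Sum>x\<in>X. \<bar>mv i x - gv i x\<bar>) \<le> (\<Sum>x\<in>X. mv i x) + (\<Sum>x\<in>X. gv i x)"
            using mv0[OF i] by (intro abs_sum_le) (auto simp: gv_def mu_v_nonneg)
          then show "(\<Sum>x\<in>X. \<bar>mv i x - gv i x\<bar>) \<le> 2"
            using mvs[OF i] unfolding gv_def by (simp add: mu_v_sum[OF assms(2) Xne])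
        next
          fix e assume e: "e \<in> E"
          have "(\<Sum>xe\<in>edge_labs X e. \<bar>me e xe - ge e xe\<bar>)
              \<le> (\<Sum>xe\<in>edge_labs X e. me e xe) + (\<Sum>xe\<in>edge_labs X e. ge e xe)"
            using me0[OF e] by (intro abs_sum_le) (auto simp: ge_def mu_e_nonneg)
          then show "(\<Sum>xe\<in>edge_labs X e. \<bar>me e xe - ge e xe\<bar>) \<le> 2"
            using mes[OF e] unfolding ge_def by (simp add: mu_e_sum[OF assms(2) Xne fin_e[OF e]])
        qed
        also have "\<dots> = 2 * real (card E + card V)" by simp
        also have "\<dots> \<le> 16 * real (card E + card V) * d * \<delta>"
        proof -
          have "2 * real (card E + card V) * 1 \<le> 2 * real (card E + card V) * (8 * d * \<delta>)"
            using 1 by (intro mult_left_mono) auto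
          then show ?thesis by (simp add: algebra_simps)
        qed
        finally show ?thesis using sl R_ge by (intro exI[of _ gv] exI[of _ ge]) linarith
      next
        case 2
        have nu0: "nu e i x = 0" if "e \<in> E" "i \<in> e" "x \<in> X" for e i x
          using hnu[OF that] 2 by simp
        have "slack_polytope V E X nu mv me"
          unfolding slack_polytope_def using mv0 me0 mvs mar nu0 by simp
        moreover have "l1_dist V E X mv me mv me = 0" unfolding l1_dist_def by simp
        moreover have "R \<ge> 0" using R_ge 2 by simp
        ultimately show ?thesis by (intro exI[of _ mv] exI[of _ me]) simp
      next
        case 3
        define t where "t = d * \<delta>"
        have t0: "t > 0" and t1: "t < 1" using 3 d2 unfolding t_def by auto
        define mv' where "mv' = (\<lambda>i x. (1 - t) * mv i x + t / d)"
        define \<beta> where "\<beta> = (\<lambda>e k y. t / d + nu e k y)"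
        define me' where "me' = (\<lambda>e xe. (1 - t) * me e xe + (\<Prod>k\<in>e. \<beta> e k (xe k)) / t)"
        have td: "t / d = \<delta>" unfolding t_def using d2 by simp
        have b0: "\<beta> e k y \<ge> 0" if "e \<in> E" "k \<in> e" "y \<in> X" for e k y
          unfolding \<beta>_def td using hnu[OF that] by linarith
        have bs: "(\<Sum>y\<in>X. \<beta> e k y) = t" if "e \<in> E" "k \<in> e" for e k
          unfolding \<beta>_def using nus[OF that] d2 by (simp add: sum.distrib d_def)
        have Q0: "(\<Prod>k\<in>e. \<beta> e k (xe k)) \<ge> 0" if "e \<in> E" "xe \<in> edge_labs X e" for e xe
          using that b0 by (intro prod_nonneg) (auto simp: edge_labs_def)
        have sl: "slack_polytope V E X nu mv' me'"
          unfolding slack_polytope_def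
        proof (intro conjI ballI)
          fix i x assume "i \<in> V" "x \<in> X"
          then show "0 \<le> mv' i x" unfolding mv'_def using mv0 t1 t0 d2 by simp
        next
          fix e xe assume "e \<in> E" "xe \<in> edge_labs X e"
          then show "0 \<le> me' e xe" unfolding me'_def using me0 Q0 t1 t0 by simp
        next
          fix i assume "i \<in> V"
          then show "(\<Sum>x\<in>X. mv' i x) = 1" unfolding mv'_def using mvs d2
            by (simp add: sum.distrib sum_distrib_left[symmetric] d_def)
        next
          fix e i x assume e: "e \<in> E" and i: "i \<in> e" and x: "x \<in> X"
          have ce: "card (e - {i}) = 1" using edges[OF e] i fin_e[OF e] by simp
          have "(\<Sum>xe\<in>{xe\<in>edge_labs X e. xe i = x}. me' e xe)
              = (1 - t) * (\<Sum>xe\<in>{xe\<in>edge_labs X e. xe i = x}. me e xe)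
                + (\<Sum>xe\<in>{xe\<in>edge_labs X e. xe i = x}. \<Prod>k\<in>e. \<beta> e k (xe k)) / t"
            unfolding me'_def by (simp add: sum.distrib sum_distrib_left sum_divide_distrib)
          also have "\<dots> = (1 - t) * mv i x + \<beta> e i x * (\<Prod>k\<in>e-{i}. t) / t"
            using mar[OF e i x] marg_prod[OF fin_e[OF e] i x assms(2), of "\<beta> e"] bs[OF e]
            by simp
          also have "\<dots> = mv' i x + nu e i x"
            using ce t0 unfolding mv'_def \<beta>_def by simp
          finally show "(\<Sum>xe\<in>{xe\<in>edge_labs X e. xe i = x}. me' e xe) = mv' i x + nu e i x" .
        qed
        have "l1_dist V E X mv me mv' me' \<le> (\<Sum>i\<in>V. 2 * t) + (\<Sum>e\<in>E. 2 * t)"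
          unfolding l1_dist_def
        proof (intro add_mono sum_mono)
          fix i assume i: "i \<in> V"
          have "(\<Sum>x\<in>X. \<bar>mv i x - mv' i x\<bar>) = (\<Sum>x\<in>X. \<bar>t * mv i x - t / d\<bar>)"
            unfolding mv'_def by (intro sum.cong) (auto simp: algebra_simps)
          also have "\<dots> \<le> (\<Sum>x\<in>X. t * mv i x) + (\<Sum>x\<in>X. t / d)"
            using mv0[OF i] t0 d2 by (intro abs_sum_le) auto
          also have "\<dots> = 2 * t"
            using mvs[OF i] d2 by (simp add: sum_distrib_left[symmetric] d_def)
          finally show "(\<Sum>x\<in>X. \<bar>mv i x - mv' i x\<bar>) \<le> 2 * t" .
        next
          fix e assume e: "e \<in> E"
          have "(\<Sum>xe\<in>edge_labs X e. \<bar>me e xe - me' e xe\<bar>)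
              = (\<Sum>xe\<in>edge_labs X e. \<bar>t * me e xe - (\<Prod>k\<in>e. \<beta> e k (xe k)) / t\<bar>)"
            unfolding me'_def by (intro sum.cong) (auto simp: algebra_simps)
          also have "\<dots> \<le> (\<Sum>xe\<in>edge_labs X e. t * me e xe)
                        + (\<Sum>xe\<in>edge_labs X e. (\<Prod>k\<in>e. \<beta> e k (xe k)) / t)"
            using me0[OF e] Q0[OF e] t0 by (intro abs_sum_le) auto
          also have "\<dots> = t + (\<Prod>k\<in>e. t) / t"
            using mes[OF e] total_prod[OF fin_e[OF e] assms(2), of "\<beta> e"] bs[OF e]
            by (simp add: sum_distrib_left[symmetric] sum_divide_distrib[symmetric])
          also have "\<dots> = 2 * t" using edges[OF e] t0 by (simp add: power2_eq_square)
          finally show "(\<Sum>xe\<in>edge_labs X e. \<bar>me e xe - me' e xe\<bar>) \<le> 2 * t" .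
        qed
        also have "\<dots> = 2 * t * real (card E + card V)" by (simp add: algebra_simps)
        also have "\<dots> \<le> 16 * real (card E + card V) * d * \<delta>"
          unfolding t_def using d0 d2 by (simp add: algebra_simps mult_right_mono)
        finally show ?thesis using sl R_ge by (intro exI[of _ mv'] exI[of _ me']) linarith
      qed
    qed
    then show ?thesis unfolding R_def nu_def N_def \<delta>_def Sset_def d_def by simp
  qed
qed

end
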